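(* Let $(M^n,g)$ be a weakly Ricci symmetric manifold, i.e. a Riemannian manifold with nonzero (symmetric) Ricci tensor such that $$\nabla_a R_{bc} = A_a R_{bc} + B_b R_{ac} + D_c R_{ab}$$ for nonzero covector fields $A,B,D$. Then for $\alpha =A-B$ and also for $\alpha=A-D$: $$R_{cb}(\nabla_d \alpha_a - \nabla_a \alpha_d) + R_{ca}(\nabla_b \alpha_d - \nabla_d \alpha_b) + R_{cd}(\nabla_a \alpha_b - \nabla_b \alpha_a) = R_{dm}R_{bac}{}^m + R_{bm}R_{adc}{}^m + R_{am}R_{dbc}{}^m .$$
   Context: Abstract index notation with Einstein summation; $\nabla$ is the Levi-Civita connection. $R_{abc}{}^d = \partial_a \Gamma_{bc}^d - \partial_b\Gamma_{ac}^d - \Gamma_{ac}^k\Gamma_{bk}^d + \Gamma_{ak}^d \Gamma_{bc}^k$, $R_{ac}=R_{abc}{}^b$. *)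

theory Defs
  imports "HOL-Analysis.Analysis"
begin

text \<open>Local-coordinate rendering of Riemannian geometry. Points of a coordinate
patch are vectors in real^'n (the index type 'n is the dimension); tensor
components are real-valued functions of the point.\<close>

definition pd :: "'n::finite \<Rightarrow> (real^'n \<Rightarrow> real) \<Rightarrow> real^'n \<Rightarrow> real" where
  "pd i f x = deriv (\<lambda>t. f (x + t *\<^sub>R axis i 1)) 0"

fun iter_pd :: "'n::finite list \<Rightarrow> (real^'n \<Rightarrow> real) \<Rightarrow> real^'n \<Rightarrow> real" where
  "iter_pd [] f = f"
| "iter_pd (i # is) f = pd i (iter_pd is f)"

definition smooth_fun_on :: "(real^'n::finite) set \<Rightarrow> (real^'n \<Rightarrow> real) \<Rightarrow> bool" where
  "smooth_fun_on U f \<longleftrightarrow> (\<forall>is. \<forall>x\<in>U. iter_pd is f differentiable (at x))"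

definition riemannian_metric_on :: "(real^'n::finite) set \<Rightarrow> (real^'n \<Rightarrow> real^'n^'n) \<Rightarrow> bool" where
  "riemannian_metric_on U g \<longleftrightarrow> open U \<and>
     (\<forall>i j. smooth_fun_on U (\<lambda>x. g x $ i $ j)) \<and>
     (\<forall>x\<in>U. transpose (g x) = g x \<and> (\<forall>v. v \<noteq> 0 \<longrightarrow> v \<bullet> (g x *v v) > 0))"

text \<open>Christoffel symbols of the Levi-Civita connection: chr g k i j x = Gamma_ij^k.\<close>
definition chr :: "(real^'n::finite \<Rightarrow> real^'n^'n) \<Rightarrow> 'n \<Rightarrow> 'n \<Rightarrow> 'n \<Rightarrow> real^'n \<Rightarrow> real" where
  "chr g k i j x = (1/2) * (\<Sum>l\<in>UNIV. matrix_inv (g x) $ k $ l *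
      (pd i (\<lambda>y. g y $ j $ l) x + pd j (\<lambda>y. g y $ i $ l) x - pd l (\<lambda>y. g y $ i $ j) x))"

text \<open>Riemann tensor R_abc^d = d_a Gamma_bc^d - d_b Gamma_ac^d - Gamma_ac^k Gamma_bk^d + Gamma_ak^d Gamma_bc^k.\<close>
definition riem :: "(real^'n::finite \<Rightarrow> real^'n^'n) \<Rightarrow> 'n \<Rightarrow> 'n \<Rightarrow> 'n \<Rightarrow> 'n \<Rightarrow> real^'n \<Rightarrow> real" where
  "riem g a b c d x =
     pd a (chr g d b c) x - pd b (chr g d a c) x
     - (\<Sum>k\<in>UNIV. chr g k a c x * chr g d b k x)
     + (\<Sum>k\<in>UNIV. chr g d a k x * chr g k b c x)"

definition ric :: "(real^'n::finite \<Rightarrow> real^'n^'n) \<Rightarrow> 'n \<Rightarrow> 'n \<Rightarrow> real^'n \<Rightarrow> real" where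
  "ric g a c x = (\<Sum>b\<in>UNIV. riem g a b c b x)"

definition cov1 :: "(real^'n::finite \<Rightarrow> real^'n^'n) \<Rightarrow> (real^'n \<Rightarrow> real^'n) \<Rightarrow> 'n \<Rightarrow> 'n \<Rightarrow> real^'n \<Rightarrow> real" where
  "cov1 g w a b x = pd a (\<lambda>y. w y $ b) x - (\<Sum>k\<in>UNIV. chr g k a b x * w x $ k)"

definition cov2 :: "(real^'n::finite \<Rightarrow> real^'n^'n) \<Rightarrow> ('n \<Rightarrow> 'n \<Rightarrow> real^'n \<Rightarrow> real) \<Rightarrow> 'n \<Rightarrow> 'n \<Rightarrow> 'n \<Rightarrow> real^'n \<Rightarrow> real" where
  "cov2 g T a b c x = pd a (T b c) x
     - (\<Sum>k\<in>UNIV. chr g k a b x * T k c x)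
     - (\<Sum>k\<in>UNIV. chr g k a c x * T b k x)"

definition weakly_ricci_symmetric_on ::
  "(real^'n::finite) set \<Rightarrow> (real^'n \<Rightarrow> real^'n^'n) \<Rightarrow> (real^'n \<Rightarrow> real^'n) \<Rightarrow> (real^'n \<Rightarrow> real^'n) \<Rightarrow> (real^'n \<Rightarrow> real^'n) \<Rightarrow> bool" where
  "weakly_ricci_symmetric_on U g A B D \<longleftrightarrow>
     riemannian_metric_on U g \<and>
     (\<exists>x\<in>U. \<exists>b c. ric g b c x \<noteq> 0) \<and>
     (\<forall>i. smooth_fun_on U (\<lambda>x. A x $ i) \<and> smooth_fun_on U (\<lambda>x. B x $ i) \<and> smooth_fun_on U (\<lambda>x. D x $ i)) \<and>
     (\<exists>x\<in>U. A x \<noteq> 0) \<and> (\<exists>x\<in>U. B x \<noteq> 0) \<and> (\<exists>x\<in>U. D x \<noteq> 0) \<and>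
     (\<forall>x\<in>U. \<forall>a b c. cov2 g (ric g) a b c x =
        A x $ a * ric g b c x + B x $ b * ric g a c x + D x $ c * ric g a b x)"

end

theory Submission
  imports Defs "HOL-Analysis.Analysis"
begin


lemma line_deriv:
  assumes "f differentiable (at (y + t0 *\<^sub>R v))"
  shows "((\<lambda>t. f (y + t *\<^sub>R v)) has_real_derivative frechet_derivative f (at (y + t0 *\<^sub>R v)) v) (at t0)"
proof -
  let ?p = "y + t0 *\<^sub>R v"
  have f: "(f has_derivative frechet_derivative f (at ?p)) (at ?p)"
    using assms frechet_derivative_works by blast
  have lin: "linear (frechet_derivative f (at ?p))" using f has_derivative_linear by blast
  have l: "((\<lambda>t. y + t *\<^sub>R v) has_derivative (\<lambda>t. t *\<^sub>R v)) (at t0)"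
    by (auto intro!: derivative_eq_intros)
  have "((\<lambda>t. f (y + t *\<^sub>R v)) has_derivative (\<lambda>t. frechet_derivative f (at ?p) (t *\<^sub>R v))) (at t0)"
    using has_derivative_compose[OF l, of f] f by simp
  moreover have "(\<lambda>t. frechet_derivative f (at ?p) (t *\<^sub>R v)) = (*) (frechet_derivative f (at ?p) v)"
    using linear_cmul[OF lin] by (auto simp: fun_eq_iff)
  ultimately show ?thesis by (simp add: has_field_derivative_def)
qed

lemma pd_via_has:
  assumes "((\<lambda>t. f (x + t *\<^sub>R axis i 1)) has_real_derivative D) (at 0)"
  shows "pd i f x = D"
  unfolding pd_def using assms by (rule DERIV_imp_deriv)

lemma pd_frechet:
  assumes "f differentiable (at x)"
  shows "pd i f x = frechet_derivative f (at x) (axis i 1)"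
  using line_deriv[of f x 0 "axis i 1"] assms by (intro pd_via_has) simp

lemma pd_has:
  assumes "f differentiable (at x)"
  shows "((\<lambda>t. f (x + t *\<^sub>R axis i 1)) has_real_derivative pd i f x) (at 0)"
  using line_deriv[of f x 0 "axis i 1"] assms pd_frechet[OF assms] by simp

lemma line_pd:
  assumes "f differentiable (at (y + t0 *\<^sub>R axis i 1))"
  shows "((\<lambda>t. f (y + t *\<^sub>R axis i 1)) has_real_derivative pd i f (y + t0 *\<^sub>R axis i 1)) (at t0)"
  using line_deriv[OF assms] pd_frechet[OF assms] by simp

lemma pd_add:
  assumes "f differentiable (at x)" "g differentiable (at x)"
  shows "pd i (\<lambda>y. f y + g y) x = pd i f x + pd i g x"
  by (rule pd_via_has) (rule DERIV_add[OF pd_has[OF assms(1)] pd_has[OF assms(2)]])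

lemma pd_diff:
  assumes "f differentiable (at x)" "g differentiable (at x)"
  shows "pd i (\<lambda>y. f y - g y) x = pd i f x - pd i g x"
  by (rule pd_via_has) (rule DERIV_diff[OF pd_has[OF assms(1)] pd_has[OF assms(2)]])

lemma pd_mult:
  assumes "f differentiable (at x)" "g differentiable (at x)"
  shows "pd i (\<lambda>y. f y * g y) x = pd i f x * g x + f x * pd i g x"
  by (rule pd_via_has) (use DERIV_mult[OF pd_has[OF assms(1)] pd_has[OF assms(2)]] in \<open>simp add: algebra_simps\<close>)

lemma pd_const: "pd i (\<lambda>y. c) x = 0"
  by (rule pd_via_has) simp

lemma pd_cmult:
  assumes "f differentiable (at x)"
  shows "pd i (\<lambda>y. c * f y) x = c * pd i f x"
  by (rule pd_via_has) (rule DERIV_cmult[OF pd_has[OF assms(1)]])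

lemma pd_sum:
  assumes "\<And>k. k \<in> S \<Longrightarrow> f k differentiable (at x)"
  shows "pd i (\<lambda>y. \<Sum>k\<in>S. f k y) x = (\<Sum>k\<in>S. pd i (f k) x)"
  by (rule pd_via_has) (rule DERIV_sum, rule pd_has[OF assms])

lemma pd_inverse:
  assumes "f differentiable (at x)" "f x \<noteq> 0"
  shows "pd i (\<lambda>y. inverse (f y)) x = - (pd i f x * inverse ((f x)\<^sup>2))"
  by (rule pd_via_has) (use DERIV_inverse_fun[OF pd_has[OF assms(1)]] assms(2) in \<open>simp add: power2_eq_square\<close>)

lemma pd_local:
  assumes "open U" "x \<in> U" "\<And>y. y \<in> U \<Longrightarrow> f y = h y"
  shows "pd i f x = pd i h x"
proof -
  let ?S = "(\<lambda>t::real. x + t *\<^sub>R axis i 1) -` U"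
  have "open ?S" by (rule open_vimage[OF assms(1)]) (intro continuous_intros)
  moreover have "0 \<in> ?S" using assms(2) by simp
  ultimately have "\<forall>\<^sub>F t in nhds 0. t \<in> ?S" using eventually_nhds by blast
  then have "\<forall>\<^sub>F t in nhds 0. f (x + t *\<^sub>R axis i 1) = h (x + t *\<^sub>R axis i 1)"
    by eventually_elim (use assms(3) in auto)
  then show ?thesis unfolding pd_def by (rule deriv_cong_ev) simp
qed


definition Cn :: "(real^'n::finite) set \<Rightarrow> nat \<Rightarrow> (real^'n \<Rightarrow> real) \<Rightarrow> bool" where
  "Cn U n f \<longleftrightarrow> (\<forall>is. length is \<le> n \<longrightarrow> (\<forall>x\<in>U. iter_pd is f differentiable (at x)))"

lemma iter_pd_append: "iter_pd (is @ [i]) f = iter_pd is (pd i f)"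
  by (induction "is") auto

lemma smooth_Cn: "smooth_fun_on U f \<longleftrightarrow> (\<forall>n. Cn U n f)"
  unfolding smooth_fun_on_def Cn_def by (metis le_refl)

lemma Cn_0: "Cn U 0 f \<longleftrightarrow> (\<forall>x\<in>U. f differentiable (at x))"
  unfolding Cn_def by auto

lemma Cn_Suc: "Cn U (Suc n) f \<longleftrightarrow> Cn U 0 f \<and> (\<forall>i. Cn U n (pd i f))"
proof
  assume a: "Cn U (Suc n) f"
  show "Cn U 0 f \<and> (\<forall>i. Cn U n (pd i f))"
  proof
    show "Cn U 0 f" using a unfolding Cn_def by (metis le0 order.trans)
    show "\<forall>i. Cn U n (pd i f)"
      using a unfolding Cn_def by (metis iter_pd_append length_append_singleton not_less_eq_eq)
  qed
next
  assume a: "Cn U 0 f \<and> (\<forall>i. Cn U n (pd i f))"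
  show "Cn U (Suc n) f"
    unfolding Cn_def
  proof (intro allI impI)
    fix "is" :: "'a list" assume l: "length is \<le> Suc n"
    show "\<forall>x\<in>U. iter_pd is f differentiable at x"
    proof (cases "is" rule: rev_exhaust)
      case Nil then show ?thesis using a by (simp add: Cn_0)
    next
      case (snoc js i)
      then show ?thesis using a l unfolding Cn_def by (simp add: iter_pd_append)
    qed
  qed
qed

lemma Cn_mono: "m \<le> n \<Longrightarrow> Cn U n f \<Longrightarrow> Cn U m f"
  unfolding Cn_def by auto

lemma Cn_diff0: "Cn U n f \<Longrightarrow> x \<in> U \<Longrightarrow> f differentiable (at x)"
  unfolding Cn_def by (metis iter_pd.simps(1) list.size(3) zero_le)

lemma iter_pd_local:
  assumes "open U" "\<And>y. y \<in> U \<Longrightarrow> f y = h y"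
  shows "y \<in> U \<Longrightarrow> iter_pd is f y = iter_pd is h y"
proof (induction "is" arbitrary: y)
  case Nil then show ?case using assms by simp
next
  case (Cons i js) then show ?case using pd_local[OF assms(1) Cons(2), of "iter_pd js f" "iter_pd js h"] by simp
qed

lemma Cn_cong:
  assumes "open U" "\<And>y. y \<in> U \<Longrightarrow> f y = h y" "Cn U n f"
  shows "Cn U n h"
  unfolding Cn_def
proof (intro allI impI ballI)
  fix "is" :: "'a list" and x assume l: "length is \<le> n" and x: "x \<in> U"
  have "iter_pd is f differentiable (at x)" using assms(3) l x unfolding Cn_def by auto
  then obtain D where "(iter_pd is f has_derivative D) (at x)" unfolding differentiable_def by blast
  then have "(iter_pd is h has_derivative D) (at x)"
    by (rule has_derivative_transform_within_open[OF _ assms(1) x]) (rule iter_pd_local[OF assms(1,2)])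
  then show "iter_pd is h differentiable (at x)" unfolding differentiable_def by blast
qed

lemma Cn_const: "Cn U n (\<lambda>x. c)"
proof (induction n arbitrary: c)
  case 0 then show ?case by (simp add: Cn_0)
next
  case (Suc n)
  show ?case unfolding Cn_Suc
  proof (intro conjI allI)
    show "Cn U 0 (\<lambda>x. c)" by (simp add: Cn_0)
    fix i :: 'a
    have "pd i (\<lambda>x. c) = (\<lambda>x. 0)" by (simp add: fun_eq_iff pd_const)
    then show "Cn U n (pd i (\<lambda>x. c))" using Suc.IH by simp
  qed
qed

lemma Cn_add:
  assumes "open U"
  shows "Cn U n f \<Longrightarrow> Cn U n g \<Longrightarrow> Cn U n (\<lambda>x. f x + g x)"
proof (induction n arbitrary: f g)
  case 0 then show ?case by (auto simp: Cn_0)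
next
  case (Suc n)
  show ?case unfolding Cn_Suc
  proof
    show "Cn U 0 (\<lambda>x. f x + g x)" using Suc.prems by (auto simp: Cn_Suc Cn_0)
    show "\<forall>i. Cn U n (pd i (\<lambda>x. f x + g x))"
    proof
      fix i
      have "Cn U n (\<lambda>x. pd i f x + pd i g x)" using Suc by (simp add: Cn_Suc)
      then show "Cn U n (pd i (\<lambda>x. f x + g x))"
        by (rule Cn_cong[OF assms, rotated]) (use Suc.prems pd_add Cn_diff0 in metis)
    qed
  qed
qed

lemma Cn_cmult:
  assumes "open U"
  shows "Cn U n f \<Longrightarrow> Cn U n (\<lambda>x. c * f x)"
proof (induction n arbitrary: f)
  case 0 then show ?case by (auto simp: Cn_0)
next
  case (Suc n)
  show ?case unfolding Cn_Suc
  proof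
    show "Cn U 0 (\<lambda>x. c * f x)" using Suc.prems by (auto simp: Cn_Suc Cn_0)
    show "\<forall>i. Cn U n (pd i (\<lambda>x. c * f x))"
    proof
      fix i
      have "Cn U n (\<lambda>x. c * pd i f x)" using Suc by (simp add: Cn_Suc)
      then show "Cn U n (pd i (\<lambda>x. c * f x))"
        by (rule Cn_cong[OF assms, rotated]) (use Suc.prems pd_cmult Cn_diff0 in metis)
    qed
  qed
qed

lemma Cn_mult:
  assumes "open U"
  shows "Cn U n f \<Longrightarrow> Cn U n g \<Longrightarrow> Cn U n (\<lambda>x. f x * g x)"
proof (induction n arbitrary: f g)
  case 0 then show ?case by (auto simp: Cn_0)
next
  case (Suc n)
  show ?case unfolding Cn_Suc
  proof
    show "Cn U 0 (\<lambda>x. f x * g x)" using Suc.prems by (auto simp: Cn_Suc Cn_0)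
    show "\<forall>i. Cn U n (pd i (\<lambda>x. f x * g x))"
    proof
      fix i
      have f: "Cn U n f" "Cn U n (pd i f)" and g: "Cn U n g" "Cn U n (pd i g)"
        using Suc.prems Cn_mono[of n "Suc n"] by (auto simp: Cn_Suc)
      have "Cn U n (\<lambda>x. pd i f x * g x + f x * pd i g x)"
        by (rule Cn_add[OF assms]; rule Suc.IH) (use f g in auto)
      then show "Cn U n (pd i (\<lambda>x. f x * g x))"
        by (rule Cn_cong[OF assms, rotated]) (use Suc.prems pd_mult Cn_diff0 in metis)
    qed
  qed
qed

lemma Cn_inverse:
  assumes "open U" "\<And>x. x \<in> U \<Longrightarrow> f x \<noteq> 0"
  shows "Cn U n f \<Longrightarrow> Cn U n (\<lambda>x. inverse (f x))"
proof (induction n)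
  case 0 then show ?case using assms(2) by (auto simp: Cn_0 intro: differentiable_inverse)
next
  case (Suc n)
  have ih: "Cn U n (\<lambda>x. inverse (f x))" using Suc Cn_mono[of n "Suc n"] by auto
  show ?case unfolding Cn_Suc
  proof
    show "Cn U 0 (\<lambda>x. inverse (f x))" using Cn_mono ih by blast
    show "\<forall>i. Cn U n (pd i (\<lambda>x. inverse (f x)))"
    proof
      fix i
      have f: "Cn U n (pd i f)"
        using Suc.prems by (auto simp: Cn_Suc)
      have "Cn U n (\<lambda>x. (-1) * (pd i f x * (inverse (f x) * inverse (f x))))"
        by (intro Cn_cmult Cn_mult assms f ih)
      then show "Cn U n (pd i (\<lambda>x. inverse (f x)))"
        by (rule Cn_cong[OF assms(1), rotated])
          (use pd_inverse[OF Cn_diff0[OF Suc.prems] assms(2)] in \<open>auto simp: power2_eq_square\<close>)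
    qed
  qed
qed

lemma Cn_sum:
  assumes "open U"
  shows "finite S \<Longrightarrow> (\<And>k. k \<in> S \<Longrightarrow> Cn U n (f k)) \<Longrightarrow> Cn U n (\<lambda>x. \<Sum>k\<in>S. f k x)"
proof (induction S rule: finite_induct)
  case empty then show ?case using Cn_const[of U n 0] by simp
next
  case (insert a S) then show ?case by (simp add: Cn_add[OF assms])
qed

lemma Cn_prod:
  assumes "open U"
  shows "finite S \<Longrightarrow> (\<And>k. k \<in> S \<Longrightarrow> Cn U n (f k)) \<Longrightarrow> Cn U n (\<lambda>x. \<Prod>k\<in>S. f k x)"
proof (induction S rule: finite_induct)
  case empty then show ?case using Cn_const[of U n 1] by simp
next
  case (insert a S) then show ?case by (simp add: Cn_mult[OF assms])
qed

lemma Cn_pd: "Cn U (Suc n) f \<Longrightarrow> Cn U n (pd i f)"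
  by (simp add: Cn_Suc)


lemma Cn2_facts:
  assumes "Cn U 2 f" "y \<in> U"
  shows "f differentiable (at y)" "pd i f differentiable (at y)" "pd j (pd i f) differentiable (at y)"
proof -
  have "Cn U 1 (pd i f)" "Cn U 0 (pd j (pd i f))" "Cn U 0 f"
    using assms(1) by (auto simp: numeral_2_eq_2 Cn_Suc)
  then show "f differentiable (at y)" "pd i f differentiable (at y)" "pd j (pd i f) differentiable (at y)"
    using assms(2) by (auto simp: Cn_0 Cn_Suc)
qed

lemma mixed_mvt:
  fixes x :: "real^'n::finite"
  assumes f: "Cn U 2 f" and ball: "ball x \<delta> \<subseteq> U" and h: "0 < h" "2 * h < \<delta>"
  shows "\<exists>p. dist p x < \<delta> \<and>
    f (x + h *\<^sub>R axis i 1 + h *\<^sub>R axis j 1) - f (x + h *\<^sub>R axis i 1) - f (x + h *\<^sub>R axis j 1) + f x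
      = h\<^sup>2 * pd j (pd i f) p"
proof -
  let ?e = "axis i 1 :: real^'n" and ?d = "axis j 1 :: real^'n"
  have inU: "x + s *\<^sub>R ?e + t *\<^sub>R ?d \<in> U" if "0 \<le> s" "s \<le> h" "0 \<le> t" "t \<le> h" for s t
  proof -
    have "norm (s *\<^sub>R ?e + t *\<^sub>R ?d) \<le> norm (s *\<^sub>R ?e) + norm (t *\<^sub>R ?d)" by (rule norm_triangle_ineq)
    also have "\<dots> = s + t" using that by (simp add: norm_axis_1)
    finally have "dist (x + s *\<^sub>R ?e + t *\<^sub>R ?d) x < \<delta>" using that h by (simp add: dist_norm add.assoc)
    then show ?thesis using ball by (auto simp: dist_commute)
  qed
  define \<phi> where "\<phi> = (\<lambda>t. f ((x + h *\<^sub>R ?d) + t *\<^sub>R ?e) - f (x + t *\<^sub>R ?e))"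
  have "\<And>t. 0 \<le> t \<Longrightarrow> t \<le> h \<Longrightarrow> (\<phi> has_real_derivative
          (pd i f ((x + h *\<^sub>R ?d) + t *\<^sub>R ?e) - pd i f (x + t *\<^sub>R ?e))) (at t)"
  proof -
    fix t assume t: "0 \<le> t" "t \<le> h"
    have u1: "(x + h *\<^sub>R ?d) + t *\<^sub>R ?e \<in> U" using inU[OF t, of h] h by (simp add: add_ac)
    have u2: "x + t *\<^sub>R ?e \<in> U" using inU[OF t, of 0] h by simp
    show "(\<phi> has_real_derivative
          (pd i f ((x + h *\<^sub>R ?d) + t *\<^sub>R ?e) - pd i f (x + t *\<^sub>R ?e))) (at t)"
      unfolding \<phi>_def
      by (intro DERIV_diff line_pd Cn2_facts(1)[OF f] u1 u2)
  qed
  from MVT2[OF h(1) this] obtain \<xi> where xi: "0 < \<xi>" "\<xi> < h"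
    and eq1: "\<phi> h - \<phi> 0 = (h - 0) * (pd i f ((x + h *\<^sub>R ?d) + \<xi> *\<^sub>R ?e) - pd i f (x + \<xi> *\<^sub>R ?e))"
    by blast
  define \<psi> where "\<psi> = (\<lambda>s. pd i f ((x + \<xi> *\<^sub>R ?e) + s *\<^sub>R ?d))"
  have "\<And>s. 0 \<le> s \<Longrightarrow> s \<le> h \<Longrightarrow> (\<psi> has_real_derivative pd j (pd i f) ((x + \<xi> *\<^sub>R ?e) + s *\<^sub>R ?d)) (at s)"
  proof -
    fix s assume s: "0 \<le> s" "s \<le> h"
    have "(x + \<xi> *\<^sub>R ?e) + s *\<^sub>R ?d \<in> U" using inU[of \<xi> s] xi s by simp
    then show "(\<psi> has_real_derivative pd j (pd i f) ((x + \<xi> *\<^sub>R ?e) + s *\<^sub>R ?d)) (at s)"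
      unfolding \<psi>_def by (intro line_pd Cn2_facts(2)[OF f])
  qed
  from MVT2[OF h(1) this] obtain \<eta> where eta: "0 < \<eta>" "\<eta> < h"
    and eq2: "\<psi> h - \<psi> 0 = (h - 0) * pd j (pd i f) ((x + \<xi> *\<^sub>R ?e) + \<eta> *\<^sub>R ?d)"
    by blast
  let ?p = "(x + \<xi> *\<^sub>R ?e) + \<eta> *\<^sub>R ?d"
  have "norm (\<xi> *\<^sub>R ?e + \<eta> *\<^sub>R ?d) \<le> norm (\<xi> *\<^sub>R ?e) + norm (\<eta> *\<^sub>R ?d)" by (rule norm_triangle_ineq)
  also have "\<dots> = \<xi> + \<eta>" using xi eta by (simp add: norm_axis_1)
  finally have dp: "dist ?p x < \<delta>" using xi eta h by (simp add: dist_norm add.assoc)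
  have "\<psi> h - \<psi> 0 = pd i f ((x + h *\<^sub>R ?d) + \<xi> *\<^sub>R ?e) - pd i f (x + \<xi> *\<^sub>R ?e)"
    unfolding \<psi>_def by (simp add: add_ac)
  then have "\<phi> h - \<phi> 0 = h\<^sup>2 * pd j (pd i f) ?p" using eq1 eq2 by (simp add: power2_eq_square)
  moreover have "\<phi> h - \<phi> 0 = f (x + h *\<^sub>R ?e + h *\<^sub>R ?d) - f (x + h *\<^sub>R ?e) - f (x + h *\<^sub>R ?d) + f x"
    unfolding \<phi>_def by (simp add: add_ac)
  ultimately show ?thesis using dp by metis
qed

lemma schwarz:
  fixes x :: "real^'n::finite"
  assumes U: "open U" "x \<in> U" and f: "Cn U 2 f"
  shows "pd i (pd j f) x = pd j (pd i f) x"
proof -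
  let ?F = "pd j (pd i f)" and ?G = "pd i (pd j f)"
  have cF: "isCont ?F x" and cG: "isCont ?G x"
    using Cn2_facts(3)[OF f U(2)] differentiable_imp_continuous_within by blast+
  have "\<bar>?G x - ?F x\<bar> < 2 * \<epsilon>" if e: "\<epsilon> > 0" for \<epsilon>
  proof -
    obtain d1 where d1: "d1 > 0" "\<forall>y. dist y x < d1 \<longrightarrow> dist (?F y) (?F x) < \<epsilon>"
      using cF e unfolding continuous_at_eps_delta by blast
    obtain d2 where d2: "d2 > 0" "\<forall>y. dist y x < d2 \<longrightarrow> dist (?G y) (?G x) < \<epsilon>"
      using cG e unfolding continuous_at_eps_delta by blast
    obtain d3 where d3: "d3 > 0" "ball x d3 \<subseteq> U" using openE[OF U] by blast
    define \<delta> where "\<delta> = min d1 (min d2 d3)"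
    have dpos: "\<delta> > 0" using d1 d2 d3 by (simp add: \<delta>_def)
    have bU: "ball x \<delta> \<subseteq> U" using d3 by (auto simp: \<delta>_def)
    define h where "h = \<delta> / 3"
    have h: "0 < h" "2 * h < \<delta>" using dpos by (auto simp: h_def)
    obtain p where p: "dist p x < \<delta>" and ep:
      "f (x + h *\<^sub>R axis i 1 + h *\<^sub>R axis j 1) - f (x + h *\<^sub>R axis i 1) - f (x + h *\<^sub>R axis j 1) + f x
        = h\<^sup>2 * ?F p" using mixed_mvt[OF f bU h, of i j] by blast
    obtain q where q: "dist q x < \<delta>" and eq:
      "f (x + h *\<^sub>R axis j 1 + h *\<^sub>R axis i 1) - f (x + h *\<^sub>R axis j 1) - f (x + h *\<^sub>R axis i 1) + f x
        = h\<^sup>2 * ?G q" using mixed_mvt[OF f bU h, of j i] by blast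
    have xx: "x + h *\<^sub>R axis j 1 + h *\<^sub>R axis i 1 = x + h *\<^sub>R axis i 1 + h *\<^sub>R axis j 1"
      by (simp add: add_ac)
    have "h\<^sup>2 * ?F p = h\<^sup>2 * ?G q" using ep eq unfolding xx by linarith
    then have pq: "?F p = ?G q" using h by simp
    have "dist (?F p) (?F x) < \<epsilon>" using d1 p by (simp add: \<delta>_def)
    moreover have "dist (?G q) (?G x) < \<epsilon>" using d2 q by (simp add: \<delta>_def)
    ultimately show ?thesis using pq by (simp add: dist_real_def)
  qed
  note key = this
  show ?thesis
  proof (rule ccontr)
    assume ne: "?G x \<noteq> ?F x"
    then have "\<bar>?G x - ?F x\<bar> / 2 > 0" by simp
    from key[OF this] show False by simp
  qed
qed


definition sm :: "(real^'n::finite) set \<Rightarrow> (real^'n \<Rightarrow> real) \<Rightarrow> bool" where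
  "sm U f \<longleftrightarrow> (\<forall>n. Cn U n f)"

lemma sm_smooth: "sm U f \<longleftrightarrow> smooth_fun_on U f"
  by (simp add: sm_def smooth_Cn)

lemma sm_const: "sm U (\<lambda>x. c)" by (simp add: sm_def Cn_const)

lemma sm_add: "open U \<Longrightarrow> sm U f \<Longrightarrow> sm U g \<Longrightarrow> sm U (\<lambda>x. f x + g x)"
  by (simp add: sm_def Cn_add)

lemma sm_cmult: "open U \<Longrightarrow> sm U f \<Longrightarrow> sm U (\<lambda>x. c * f x)"
  by (simp add: sm_def Cn_cmult)

lemma sm_mult: "open U \<Longrightarrow> sm U f \<Longrightarrow> sm U g \<Longrightarrow> sm U (\<lambda>x. f x * g x)"
  by (simp add: sm_def Cn_mult)

lemma sm_diff: "open U \<Longrightarrow> sm U f \<Longrightarrow> sm U g \<Longrightarrow> sm U (\<lambda>x. f x - g x)"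
  using sm_add[of U f "\<lambda>x. (-1) * g x"] sm_cmult[of U g "-1"] by simp

lemma sm_sum: "open U \<Longrightarrow> finite S \<Longrightarrow> (\<And>k. k \<in> S \<Longrightarrow> sm U (f k)) \<Longrightarrow> sm U (\<lambda>x. \<Sum>k\<in>S. f k x)"
  by (simp add: sm_def Cn_sum)

lemma sm_prod: "open U \<Longrightarrow> finite S \<Longrightarrow> (\<And>k. k \<in> S \<Longrightarrow> sm U (f k)) \<Longrightarrow> sm U (\<lambda>x. \<Prod>k\<in>S. f k x)"
  by (simp add: sm_def Cn_prod)

lemma sm_inverse: "open U \<Longrightarrow> (\<And>x. x \<in> U \<Longrightarrow> f x \<noteq> 0) \<Longrightarrow> sm U f \<Longrightarrow> sm U (\<lambda>x. inverse (f x))"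
  by (simp add: sm_def Cn_inverse)

lemma sm_pd: "sm U f \<Longrightarrow> sm U (pd i f)"
  by (simp add: sm_def Cn_pd)

lemma sm_cong: "open U \<Longrightarrow> (\<And>y. y \<in> U \<Longrightarrow> f y = h y) \<Longrightarrow> sm U f \<Longrightarrow> sm U h"
  unfolding sm_def using Cn_cong by blast

lemma sm_diffble: "sm U f \<Longrightarrow> x \<in> U \<Longrightarrow> f differentiable (at x)"
  unfolding sm_def using Cn_diff0 by blast

lemma sm_C2: "sm U f \<Longrightarrow> Cn U 2 f"
  unfolding sm_def by blast

lemma sm_det:
  assumes "open U" "\<And>i j. sm U (\<lambda>x. M x $ i $ j)"
  shows "sm U (\<lambda>x. det (M x :: real^'n::finite^'n))"
  unfolding det_def
  by (intro sm_sum sm_cmult sm_prod assms finite_permutations) auto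

lemma matrix_inv_props:
  fixes A :: "'a::semiring_1^'n^'n"
  assumes "invertible A"
  shows "A ** matrix_inv A = mat 1" "matrix_inv A ** A = mat 1"
  using someI_ex[OF assms[unfolded invertible_def]] unfolding matrix_inv_def by auto

lemma matrix_inv_cramer:
  fixes A :: "real^'n::finite^'n"
  assumes "det A \<noteq> 0"
  shows "matrix_inv A $ k $ l =
    det (\<chi> i j. if j = k then (if i = l then 1 else 0) else A $ i $ j) / det A"
proof -
  have inv: "invertible A" using assms invertible_det_nz by blast
  let ?b = "axis l 1 :: real^'n"
  have "A *v (matrix_inv A *v ?b) = ?b"
    by (simp add: matrix_vector_mul_assoc matrix_inv_props(1)[OF inv])
  then have "matrix_inv A *v ?b = (\<chi> k. det(\<chi> i j. if j=k then ?b$i else A$i$j) / det A)"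
    using cramer[OF assms] by blast
  then have "(matrix_inv A *v ?b) $ k = det(\<chi> i j. if j=k then ?b$i else A$i$j) / det A"
    by simp
  moreover have "(matrix_inv A *v ?b) $ k = matrix_inv A $ k $ l"
    by (simp add: matrix_vector_mult_def axis_def if_distrib cong: if_cong)
  moreover have ax: "(\<chi> i j. if j=k then ?b$i else A$i$j) = (\<chi> i j. if j = k then (if i = l then 1 else 0) else A $ i $ j)"
    by (simp add: vec_eq_iff axis_def)
  ultimately show ?thesis by metis
qed

lemma posdef_det:
  fixes A :: "real^'n::finite^'n"
  assumes "\<forall>v. v \<noteq> 0 \<longrightarrow> v \<bullet> (A *v v) > 0"
  shows "det A \<noteq> 0"
proof -
  have "inj ((*v) A)"
  proof (rule injI)
    fix u w assume "A *v u = A *v w"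
    then have "A *v (u - w) = 0" by (simp add: matrix_vector_mult_diff_distrib)
    then show "u = w" using assms by (metis eq_iff_diff_eq_0 inner_zero_right less_irrefl)
  qed
  then have "det (matrix ((*v) A)) \<noteq> 0"
    using det_nz_iff_inj[OF matrix_vector_mul_linear] by blast
  then show ?thesis by (simp add: matrix_of_matrix_vector_mul)
qed


locale rmetric =
  fixes U :: "(real^'n::finite) set" and g :: "real^'n \<Rightarrow> real^'n^'n"
  assumes rm: "riemannian_metric_on U g"
begin

lemma openU: "open U" using rm by (simp add: riemannian_metric_on_def)

lemma sm_g: "sm U (\<lambda>x. g x $ i $ j)"
  using rm by (simp add: riemannian_metric_on_def sm_smooth)

lemma g_sym:
  assumes "x \<in> U" shows "g x $ i $ j = g x $ j $ i"
proof -
  have "transpose (g x) = g x" using rm assms by (simp add: riemannian_metric_on_def)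
  then have "transpose (g x) $ j $ i = g x $ j $ i" by simp
  then show ?thesis by (simp add: transpose_def)
qed

lemma det_g: "x \<in> U \<Longrightarrow> det (g x) \<noteq> 0"
  using rm posdef_det unfolding riemannian_metric_on_def by blast

lemma inv_g: "x \<in> U \<Longrightarrow> g x ** matrix_inv (g x) = mat 1 \<and> matrix_inv (g x) ** g x = mat 1"
  using det_g matrix_inv_props invertible_det_nz by blast

lemma sm_ginv: "sm U (\<lambda>x. matrix_inv (g x) $ k $ l)"
proof -
  let ?M = "\<lambda>x. (\<chi> i j. if j = k then (if i = l then 1 else 0) else g x $ i $ j) :: real^'n^'n"
  have dM: "sm U (\<lambda>x. det (?M x))"
  proof (rule sm_det[OF openU])
    fix i j show "sm U (\<lambda>x. ?M x $ i $ j)"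
      by (cases "j = k") (simp_all add: sm_const sm_g)
  qed
  have "sm U (\<lambda>x. det (?M x) * inverse (det (g x)))"
    by (rule sm_mult[OF openU dM sm_inverse[OF openU det_g sm_det[OF openU sm_g]]])
  then show ?thesis
    by (rule sm_cong[OF openU, rotated]) (simp add: matrix_inv_cramer det_g divide_inverse)
qed

lemma sm_chr: "sm U (chr g k i j)"
  unfolding chr_def[abs_def]
  by (intro sm_cmult sm_sum sm_mult sm_add sm_diff sm_pd openU sm_ginv sm_g finite)

lemma sm_riem: "sm U (riem g a b c d)"
  unfolding riem_def[abs_def]
  by (intro sm_cmult sm_sum sm_mult sm_add sm_diff sm_pd openU sm_chr finite)

lemma sm_ric: "sm U (ric g a c)"
  unfolding ric_def[abs_def]
  by (intro sm_sum openU sm_riem finite)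

end


lemma ricci_alg:
  fixes G :: "'n::finite \<Rightarrow> 'n \<Rightarrow> 'n \<Rightarrow> real" and dG :: "'n \<Rightarrow> 'n \<Rightarrow> 'n \<Rightarrow> 'n \<Rightarrow> real"
    and T :: "'n \<Rightarrow> 'n \<Rightarrow> real" and dT :: "'n \<Rightarrow> 'n \<Rightarrow> 'n \<Rightarrow> real"
    and ddT :: "'n \<Rightarrow> 'n \<Rightarrow> 'n \<Rightarrow> 'n \<Rightarrow> real"
  assumes Gsym: "\<And>k a b. G k a b = G k b a"
    and ddsym: "\<And>d a b c. ddT d a b c = ddT a d b c"
    and C_def: "\<And>a b c. C a b c = dT a b c - (\<Sum>k\<in>UNIV. G k a b * T k c) - (\<Sum>k\<in>UNIV. G k a c * T b k)"
    and P_def: "\<And>d a b c. P d a b c = ddT d a b c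
        - (\<Sum>k\<in>UNIV. dG d k a b * T k c + G k a b * dT d k c)
        - (\<Sum>k\<in>UNIV. dG d k a c * T b k + G k a c * dT d b k)"
    and Q_def: "\<And>d a b c. Q d a b c = P d a b c - (\<Sum>k\<in>UNIV. G k d a * C k b c)
        - (\<Sum>k\<in>UNIV. G k d b * C a k c) - (\<Sum>k\<in>UNIV. G k d c * C a b k)"
    and R_def: "\<And>d a b m. R d a b m = dG d m a b - dG a m d b - (\<Sum>k\<in>UNIV. G k d b * G m a k)
        + (\<Sum>k\<in>UNIV. G m d k * G k a b)"
  shows "Q d a b c - Q a d b c = - (\<Sum>m\<in>UNIV. R d a b m * T m c) - (\<Sum>m\<in>UNIV. R d a c m * T b m)"
proof -
  have e1: "(\<Sum>k\<in>UNIV. G k d a * C k b c) = (\<Sum>k\<in>UNIV. G k a d * C k b c)"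
    by (simp add: Gsym[of _ d a])
  have e2: "P d a b c - P a d b c = - (\<Sum>k\<in>UNIV. (dG d k a b - dG a k d b) * T k c)
     - (\<Sum>k\<in>UNIV. (dG d k a c - dG a k d c) * T b k)
     - (\<Sum>k\<in>UNIV. G k a b * dT d k c) + (\<Sum>k\<in>UNIV. G k d b * dT a k c)
     - (\<Sum>k\<in>UNIV. G k a c * dT d b k) + (\<Sum>k\<in>UNIV. G k d c * dT a b k)"
    unfolding P_def using ddsym[of d a b c]
    by (simp add: sum_subtractf sum.distrib algebra_simps)
  have x1: "(\<Sum>k\<in>UNIV. G k d b * C a k c) = (\<Sum>k\<in>UNIV. G k d b * dT a k c)
      - (\<Sum>k\<in>UNIV. \<Sum>l\<in>UNIV. G k d b * G l a k * T l c) - (\<Sum>k\<in>UNIV. \<Sum>l\<in>UNIV. G k d b * G l a c * T k l)"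
    unfolding C_def by (simp add: sum_subtractf sum_distrib_left sum.distrib algebra_simps)
  have x2: "(\<Sum>k\<in>UNIV. G k d c * C a b k) = (\<Sum>k\<in>UNIV. G k d c * dT a b k)
      - (\<Sum>k\<in>UNIV. \<Sum>l\<in>UNIV. G k d c * G l a b * T l k) - (\<Sum>k\<in>UNIV. \<Sum>l\<in>UNIV. G k d c * G l a k * T b l)"
    unfolding C_def by (simp add: sum_subtractf sum_distrib_left sum.distrib algebra_simps)
  have x3: "(\<Sum>k\<in>UNIV. G k a b * C d k c) = (\<Sum>k\<in>UNIV. G k a b * dT d k c)
      - (\<Sum>k\<in>UNIV. \<Sum>l\<in>UNIV. G k a b * G l d k * T l c) - (\<Sum>k\<in>UNIV. \<Sum>l\<in>UNIV. G k a b * G l d c * T k l)"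
    unfolding C_def by (simp add: sum_subtractf sum_distrib_left sum.distrib algebra_simps)
  have x4: "(\<Sum>k\<in>UNIV. G k a c * C d b k) = (\<Sum>k\<in>UNIV. G k a c * dT d b k)
      - (\<Sum>k\<in>UNIV. \<Sum>l\<in>UNIV. G k a c * G l d b * T l k) - (\<Sum>k\<in>UNIV. \<Sum>l\<in>UNIV. G k a c * G l d k * T b l)"
    unfolding C_def by (simp add: sum_subtractf sum_distrib_left sum.distrib algebra_simps)
  have s1: "(\<Sum>k\<in>UNIV. \<Sum>l\<in>UNIV. G k d b * G l a c * T k l) = (\<Sum>k\<in>UNIV. \<Sum>l\<in>UNIV. G k a c * G l d b * T l k)"
    by (subst sum.swap) (simp add: algebra_simps)
  have s2: "(\<Sum>k\<in>UNIV. \<Sum>l\<in>UNIV. G k d c * G l a b * T l k) = (\<Sum>k\<in>UNIV. \<Sum>l\<in>UNIV. G k a b * G l d c * T k l)"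
    by (subst sum.swap) (simp add: algebra_simps)
  have r1: "(\<Sum>m\<in>UNIV. R d a b m * T m c) = (\<Sum>k\<in>UNIV. (dG d k a b - dG a k d b) * T k c)
      - (\<Sum>k\<in>UNIV. \<Sum>l\<in>UNIV. G k d b * G l a k * T l c) + (\<Sum>k\<in>UNIV. \<Sum>l\<in>UNIV. G k a b * G l d k * T l c)"
  proof -
    have "(\<Sum>m\<in>UNIV. R d a b m * T m c) = (\<Sum>k\<in>UNIV. (dG d k a b - dG a k d b) * T k c)
      - (\<Sum>m\<in>UNIV. \<Sum>k\<in>UNIV. G k d b * G m a k * T m c) + (\<Sum>m\<in>UNIV. \<Sum>k\<in>UNIV. G m d k * G k a b * T m c)"
      unfolding R_def by (simp add: sum_subtractf sum.distrib sum_distrib_right sum_distrib_left algebra_simps)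
    moreover have "(\<Sum>m\<in>UNIV. \<Sum>k\<in>UNIV. G k d b * G m a k * T m c) = (\<Sum>k\<in>UNIV. \<Sum>l\<in>UNIV. G k d b * G l a k * T l c)"
      by (rule sum.swap)
    moreover have "(\<Sum>m\<in>UNIV. \<Sum>k\<in>UNIV. G m d k * G k a b * T m c) = (\<Sum>k\<in>UNIV. \<Sum>l\<in>UNIV. G k a b * G l d k * T l c)"
      by (subst sum.swap) (simp add: algebra_simps)
    ultimately show ?thesis by simp
  qed
  have r2: "(\<Sum>m\<in>UNIV. R d a c m * T b m) = (\<Sum>k\<in>UNIV. (dG d k a c - dG a k d c) * T b k)
      - (\<Sum>k\<in>UNIV. \<Sum>l\<in>UNIV. G k d c * G l a k * T b l) + (\<Sum>k\<in>UNIV. \<Sum>l\<in>UNIV. G k a c * G l d k * T b l)"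
  proof -
    have "(\<Sum>m\<in>UNIV. R d a c m * T b m) = (\<Sum>k\<in>UNIV. (dG d k a c - dG a k d c) * T b k)
      - (\<Sum>m\<in>UNIV. \<Sum>k\<in>UNIV. G k d c * G m a k * T b m) + (\<Sum>m\<in>UNIV. \<Sum>k\<in>UNIV. G m d k * G k a c * T b m)"
      unfolding R_def by (simp add: sum_subtractf sum.distrib sum_distrib_right sum_distrib_left algebra_simps)
    moreover have "(\<Sum>m\<in>UNIV. \<Sum>k\<in>UNIV. G k d c * G m a k * T b m) = (\<Sum>k\<in>UNIV. \<Sum>l\<in>UNIV. G k d c * G l a k * T b l)"
      by (rule sum.swap)
    moreover have "(\<Sum>m\<in>UNIV. \<Sum>k\<in>UNIV. G m d k * G k a c * T b m) = (\<Sum>k\<in>UNIV. \<Sum>l\<in>UNIV. G k a c * G l d k * T b l)"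
      by (subst sum.swap) (simp add: algebra_simps)
    ultimately show ?thesis by simp
  qed
  have c3: "Q d a b c - Q a d b c = (P d a b c - P a d b c)
     - (\<Sum>k\<in>UNIV. G k d b * C a k c) - (\<Sum>k\<in>UNIV. G k d c * C a b k)
     + (\<Sum>k\<in>UNIV. G k a b * C d k c) + (\<Sum>k\<in>UNIV. G k a c * C d b k)"
    unfolding Q_def[of d a b c] Q_def[of a d b c] using e1 by simp
  show ?thesis
    unfolding c3 e2 x1 x2 x3 x4 r1 r2 s1 s2 by simp
qed


lemma leibniz_alg:
  fixes G :: "'n::finite \<Rightarrow> 'n \<Rightarrow> 'n \<Rightarrow> real" and Av Bv Dv :: "'n \<Rightarrow> real"
    and dA dB dD R :: "'n \<Rightarrow> 'n \<Rightarrow> real" and dR :: "'n \<Rightarrow> 'n \<Rightarrow> 'n \<Rightarrow> real"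
  assumes Q1: "\<And>a b c. Q a b c = Av a * R b c + Bv b * R a c + Dv c * R a b"
    and Q2: "\<And>a b c. Q a b c = dR a b c - (\<Sum>k\<in>UNIV. G k a b * R k c) - (\<Sum>k\<in>UNIV. G k a c * R b k)"
    and P: "P = dA d a * R b c + Av a * dR d b c + dB d b * R a c + Bv b * dR d a c + dD d c * R a b + Dv c * dR d a b"
    and Q3: "Q3 = P - (\<Sum>k\<in>UNIV. G k d a * Q k b c) - (\<Sum>k\<in>UNIV. G k d b * Q a k c) - (\<Sum>k\<in>UNIV. G k d c * Q a b k)"
  shows "Q3 = (dA d a - (\<Sum>k\<in>UNIV. G k d a * Av k)) * R b c + Av a * Q d b c
    + (dB d b - (\<Sum>k\<in>UNIV. G k d b * Bv k)) * R a c + Bv b * Q d a c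
    + (dD d c - (\<Sum>k\<in>UNIV. G k d c * Dv k)) * R a b + Dv c * Q d a b"
proof -
  have dR: "\<And>a b c. dR a b c = Q a b c + (\<Sum>k\<in>UNIV. G k a b * R k c) + (\<Sum>k\<in>UNIV. G k a c * R b k)"
    using Q2 by simp
  show ?thesis
    unfolding Q3 P dR unfolding Q1
    by (simp add: sum.distrib sum_subtractf sum_distrib_left sum_distrib_right algebra_simps)
qed

lemma cyclic_alg:
  fixes R :: "'n \<Rightarrow> 'n \<Rightarrow> real" and cA cB cD :: "'n \<Rightarrow> 'n \<Rightarrow> real" and Av Bv Dv :: "'n \<Rightarrow> real"
  assumes Rs: "\<And>i j. R i j = R j i"
    and Q1: "\<And>a b c. Q a b c = Av a * R b c + Bv b * R a c + Dv c * R a b"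
    and E: "\<And>d a b. E d a b = (cA d a * R b c + Av a * Q d b c + cB d b * R a c + Bv b * Q d a c + cD d c * R a b + Dv c * Q d a b)
                         - (cA a d * R b c + Av d * Q a b c + cB a b * R d c + Bv b * Q a d c + cD a c * R d b + Dv c * Q a d b)"
  shows "E d a b + E a b d + E b d a =
     R c b * ((cA d a - cB d a) - (cA a d - cB a d)) + R c a * ((cA b d - cB b d) - (cA d b - cB d b))
     + R c d * ((cA a b - cB a b) - (cA b a - cB b a))"
  unfolding E Q1 by (simp add: Rs[of _ c] Rs[of b a] Rs[of d a] Rs[of d b] algebra_simps)


definition cov3 :: "(real^'n::finite \<Rightarrow> real^'n^'n) \<Rightarrow> ('n \<Rightarrow> 'n \<Rightarrow> real^'n \<Rightarrow> real) \<Rightarrow> 'n \<Rightarrow> 'n \<Rightarrow> 'n \<Rightarrow> 'n \<Rightarrow> real^'n \<Rightarrow> real" where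
  "cov3 g T d a b c x = pd d (cov2 g T a b c) x
     - (\<Sum>k\<in>UNIV. chr g k d a x * cov2 g T k b c x)
     - (\<Sum>k\<in>UNIV. chr g k d b x * cov2 g T a k c x)
     - (\<Sum>k\<in>UNIV. chr g k d c x * cov2 g T a b k x)"

context rmetric
begin

lemma chr_sym:
  assumes x: "x \<in> U"
  shows "chr g k a b x = chr g k b a x"
proof -
  have "pd l (\<lambda>y. g y $ a $ b) x = pd l (\<lambda>y. g y $ b $ a) x" for l
    by (rule pd_local[OF openU x]) (simp add: g_sym)
  then show ?thesis unfolding chr_def by (simp add: add_ac)
qed

lemma pd_cov2:
  assumes x: "x \<in> U" and T: "\<And>b c. sm U (T b c)"
  shows "pd d (cov2 g T a b c) x = pd d (pd a (T b c)) x
        - (\<Sum>k\<in>UNIV. pd d (chr g k a b) x * T k c x + chr g k a b x * pd d (T k c) x)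
        - (\<Sum>k\<in>UNIV. pd d (chr g k a c) x * T b k x + chr g k a c x * pd d (T b k) x)"
proof -
  have eq: "cov2 g T a b c = (\<lambda>y. (pd a (T b c) y - (\<Sum>k\<in>UNIV. chr g k a b y * T k c y))
       - (\<Sum>k\<in>UNIV. chr g k a c y * T b k y))"
    by (rule ext) (simp add: cov2_def)
  have s1: "sm U (pd a (T b c))" by (rule sm_pd[OF T])
  have s2: "sm U (\<lambda>y. \<Sum>k\<in>UNIV. chr g k a b y * T k c y)"
    by (intro sm_sum openU sm_mult sm_chr T) auto
  have s3: "sm U (\<lambda>y. \<Sum>k\<in>UNIV. chr g k a c y * T b k y)"
    by (intro sm_sum openU sm_mult sm_chr T) auto
  have s12: "sm U (\<lambda>y. pd a (T b c) y - (\<Sum>k\<in>UNIV. chr g k a b y * T k c y))"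
    by (rule sm_diff[OF openU s1 s2])
  have "pd d (cov2 g T a b c) x = pd d (\<lambda>y. pd a (T b c) y - (\<Sum>k\<in>UNIV. chr g k a b y * T k c y)) x
      - pd d (\<lambda>y. \<Sum>k\<in>UNIV. chr g k a c y * T b k y) x"
    unfolding eq by (rule pd_diff[OF sm_diffble[OF s12 x] sm_diffble[OF s3 x]])
  also have "pd d (\<lambda>y. pd a (T b c) y - (\<Sum>k\<in>UNIV. chr g k a b y * T k c y)) x
      = pd d (pd a (T b c)) x - pd d (\<lambda>y. \<Sum>k\<in>UNIV. chr g k a b y * T k c y) x"
    by (rule pd_diff[OF sm_diffble[OF s1 x] sm_diffble[OF s2 x]])
  also have "pd d (\<lambda>y. \<Sum>k\<in>UNIV. chr g k a b y * T k c y) x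
      = (\<Sum>k\<in>UNIV. pd d (chr g k a b) x * T k c x + chr g k a b x * pd d (T k c) x)"
    by (simp add: pd_sum pd_mult sm_diffble[OF sm_mult[OF openU sm_chr T] x] sm_diffble[OF sm_chr x] sm_diffble[OF T x])
  also have "pd d (\<lambda>y. \<Sum>k\<in>UNIV. chr g k a c y * T b k y) x
      = (\<Sum>k\<in>UNIV. pd d (chr g k a c) x * T b k x + chr g k a c x * pd d (T b k) x)"
    by (simp add: pd_sum pd_mult sm_diffble[OF sm_mult[OF openU sm_chr T] x] sm_diffble[OF sm_chr x] sm_diffble[OF T x])
  finally show ?thesis .
qed

lemma ricci_identity:
  assumes x: "x \<in> U" and T: "\<And>b c. sm U (T b c)"
  shows "cov3 g T d a b c x - cov3 g T a d b c x
     = - (\<Sum>m\<in>UNIV. riem g d a b m x * T m c x) - (\<Sum>m\<in>UNIV. riem g d a c m x * T b m x)"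
proof (rule ricci_alg[where G="\<lambda>k a b. chr g k a b x" and dG="\<lambda>d k a b. pd d (chr g k a b) x"
      and T="\<lambda>b c. T b c x" and dT="\<lambda>d b c. pd d (T b c) x" and ddT="\<lambda>d a b c. pd d (pd a (T b c)) x"
      and C="\<lambda>a b c. cov2 g T a b c x" and P="\<lambda>d a b c. pd d (cov2 g T a b c) x"
      and Q="\<lambda>d a b c. cov3 g T d a b c x" and R="\<lambda>d a b m. riem g d a b m x"])
  show "\<And>k a b. chr g k a b x = chr g k b a x" by (rule chr_sym[OF x])
  show "\<And>d a b c. pd d (pd a (T b c)) x = pd a (pd d (T b c)) x"
    by (rule schwarz[OF openU x sm_C2[OF T]])
  show "\<And>a b c. cov2 g T a b c x = pd a (T b c) x - (\<Sum>k\<in>UNIV. chr g k a b x * T k c x) - (\<Sum>k\<in>UNIV. chr g k a c x * T b k x)"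
    by (simp add: cov2_def)
  show "\<And>d a b c. pd d (cov2 g T a b c) x = pd d (pd a (T b c)) x
        - (\<Sum>k\<in>UNIV. pd d (chr g k a b) x * T k c x + chr g k a b x * pd d (T k c) x)
        - (\<Sum>k\<in>UNIV. pd d (chr g k a c) x * T b k x + chr g k a c x * pd d (T b k) x)"
    by (rule pd_cov2[OF x T])
  show "\<And>d a b c. cov3 g T d a b c x = pd d (cov2 g T a b c) x - (\<Sum>k\<in>UNIV. chr g k d a x * cov2 g T k b c x)
        - (\<Sum>k\<in>UNIV. chr g k d b x * cov2 g T a k c x) - (\<Sum>k\<in>UNIV. chr g k d c x * cov2 g T a b k x)"
    by (simp add: cov3_def)
  show "\<And>d a b m. riem g d a b m x = pd d (chr g m a b) x - pd a (chr g m d b) x - (\<Sum>k\<in>UNIV. chr g k d b x * chr g m a k x)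
        + (\<Sum>k\<in>UNIV. chr g m d k x * chr g k a b x)"
    by (simp add: riem_def)
qed

end


lemma sum_delta_mult: fixes f :: "'n::finite \<Rightarrow> real" shows "(\<Sum>l\<in>UNIV. (if c = l then 1 else 0) * f l) = (f c :: real)"
proof -
  have "(\<lambda>l. (if c = l then 1 else 0) * f l) = (\<lambda>l. if c = l then f l else 0)" by auto
  then show ?thesis by (simp only:) simp
qed

lemma sum_delta_mult': fixes f :: "'n::finite \<Rightarrow> real" shows "(\<Sum>l\<in>UNIV. f l * (if l = c then 1 else 0)) = (f c :: real)"
proof -
  have "(\<lambda>l. f l * (if l = c then 1 else 0)) = (\<lambda>l. if c = l then f l else 0)" by auto
  then show ?thesis by (simp only:) simp
qed

context rmetric
begin

lemma ginv_g: "x \<in> U \<Longrightarrow> (\<Sum>k\<in>UNIV. g x $ c $ k * matrix_inv (g x) $ k $ l) = (if c = l then 1 else 0)"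
proof -
  assume x: "x \<in> U"
  have "(g x ** matrix_inv (g x)) $ c $ l = mat 1 $ c $ l" using inv_g[OF x] by simp
  then show ?thesis by (simp add: matrix_matrix_mult_def mat_def)
qed

lemma g_ginv: "x \<in> U \<Longrightarrow> (\<Sum>k\<in>UNIV. matrix_inv (g x) $ c $ k * g x $ k $ l) = (if c = l then 1 else 0)"
proof -
  assume x: "x \<in> U"
  have "(matrix_inv (g x) ** g x) $ c $ l = mat 1 $ c $ l" using inv_g[OF x] by simp
  then show ?thesis by (simp add: matrix_matrix_mult_def mat_def)
qed

lemma ginv_sym: "x \<in> U \<Longrightarrow> matrix_inv (g x) $ k $ l = matrix_inv (g x) $ l $ k"
proof -
  assume x: "x \<in> U"
  let ?A = "g x" and ?B = "matrix_inv (g x)"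
  have tA: "transpose ?A = ?A" by (simp add: vec_eq_iff transpose_def g_sym[OF x])
  have "transpose ?B ** ?A = mat 1"
    using inv_g[OF x] by (metis matrix_transpose_mul tA transpose_mat)
  then have "transpose ?B = transpose ?B ** (?A ** ?B)" using inv_g[OF x] by simp
  also have "\<dots> = ?B" by (simp add: matrix_mul_assoc \<open>transpose ?B ** ?A = mat 1\<close>)
  finally have "transpose ?B = ?B" .
  then have "transpose ?B $ l $ k = ?B $ l $ k" by simp
  then show ?thesis by (simp add: transpose_def)
qed

lemma chr_first:
  assumes x: "x \<in> U"
  shows "(\<Sum>k\<in>UNIV. chr g k a b x * g x $ k $ c) =
    (1/2) * (pd a (\<lambda>y. g y $ b $ c) x + pd b (\<lambda>y. g y $ a $ c) x - pd c (\<lambda>y. g y $ a $ b) x)"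
proof -
  let ?X = "\<lambda>l. pd a (\<lambda>y. g y $ b $ l) x + pd b (\<lambda>y. g y $ a $ l) x - pd l (\<lambda>y. g y $ a $ b) x"
  have "(\<Sum>k\<in>UNIV. chr g k a b x * g x $ k $ c)
      = (1/2) * (\<Sum>k\<in>UNIV. \<Sum>l\<in>UNIV. g x $ c $ k * matrix_inv (g x) $ k $ l * ?X l)"
    unfolding chr_def by (simp add: sum_distrib_left sum_distrib_right g_sym[OF x, of _ c] algebra_simps)
  also have "\<dots> = (1/2) * (\<Sum>l\<in>UNIV. (\<Sum>k\<in>UNIV. g x $ c $ k * matrix_inv (g x) $ k $ l) * ?X l)"
    by (subst sum.swap) (simp add: sum_distrib_right)
  also have "\<dots> = (1/2) * ?X c"
    by (simp only: ginv_g[OF x] sum_delta_mult)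
  finally show ?thesis .
qed

lemma pd_g_sym: "x \<in> U \<Longrightarrow> pd i (\<lambda>y. g y $ a $ b) x = pd i (\<lambda>y. g y $ b $ a) x"
  by (rule pd_local[OF openU]) (auto simp: g_sym)

lemma cov_g: "x \<in> U \<Longrightarrow> cov2 g (\<lambda>b c y. g y $ b $ c) a b c x = 0"
proof -
  assume x: "x \<in> U"
  have e1: "(\<Sum>k\<in>UNIV. chr g k a b x * g x $ k $ c) =
    (1/2) * (pd a (\<lambda>y. g y $ b $ c) x + pd b (\<lambda>y. g y $ a $ c) x - pd c (\<lambda>y. g y $ a $ b) x)"
    by (rule chr_first[OF x])
  have e2: "(\<Sum>k\<in>UNIV. chr g k a c x * g x $ b $ k) =
    (1/2) * (pd a (\<lambda>y. g y $ c $ b) x + pd c (\<lambda>y. g y $ a $ b) x - pd b (\<lambda>y. g y $ a $ c) x)"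
    using chr_first[OF x, of a c b] by (simp add: g_sym[OF x, of b])
  show ?thesis unfolding cov2_def e1 e2 using pd_g_sym[OF x, of a c b] by (simp add: field_simps)
qed

lemma cov3_g: "x \<in> U \<Longrightarrow> cov3 g (\<lambda>b c y. g y $ b $ c) d a b c x = 0"
proof -
  assume x: "x \<in> U"
  have "pd d (cov2 g (\<lambda>b c y. g y $ b $ c) a b c) x = pd d (\<lambda>y. 0) x"
    by (rule pd_local[OF openU x]) (simp add: cov_g)
  then show ?thesis unfolding cov3_def by (simp add: cov_g[OF x] pd_const)
qed

lemma riem_antisym_lower:
  assumes x: "x \<in> U"
  shows "(\<Sum>m\<in>UNIV. riem g d a b m x * g x $ m $ c) = - (\<Sum>m\<in>UNIV. riem g d a c m x * g x $ b $ m)"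
  using ricci_identity[OF x, of "\<lambda>b c y. g y $ b $ c" d a b c] cov3_g[OF x] sm_g by simp

lemma riem_antisym1: "riem g a b c m x = - riem g b a c m x"
  unfolding riem_def by (simp add: algebra_simps)

lemma pd_chr_sym: "x \<in> U \<Longrightarrow> pd i (chr g k a b) x = pd i (chr g k b a) x"
  by (rule pd_local[OF openU]) (auto simp: chr_sym)

lemma bianchi:
  assumes x: "x \<in> U"
  shows "riem g a b c m x + riem g b c a m x + riem g c a b m x = 0"
proof -
  have s: "\<And>k a b. chr g k a b x = chr g k b a x" by (rule chr_sym[OF x])
  have p: "\<And>i k a b. pd i (chr g k a b) x = pd i (chr g k b a) x" by (rule pd_chr_sym[OF x])
  show ?thesis unfolding riem_def
    by (simp add: s[of _ a c] s[of _ b a] s[of _ c b] p[of _ _ c b] p[of _ _ a c] p[of _ _ b a] algebra_simps)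
qed

lemma riem_trace:
  assumes x: "x \<in> U"
  shows "(\<Sum>b\<in>UNIV. riem g c a b b x) = 0"
proof -
  define L where "L b e = (\<Sum>m\<in>UNIV. riem g c a b m x * g x $ m $ e)" for b e
  define H where "H e b = matrix_inv (g x) $ e $ b" for e b
  have Lanti: "L b e = - L e b" for b e
    unfolding L_def using riem_antisym_lower[OF x, of c a b e] g_sym[OF x] by simp
  have Hsym: "H e b = H b e" for e b unfolding H_def by (rule ginv_sym[OF x])
  have "(\<Sum>b\<in>UNIV. riem g c a b b x) = (\<Sum>b\<in>UNIV. \<Sum>m\<in>UNIV. riem g c a b m x * (\<Sum>e\<in>UNIV. g x $ m $ e * H e b))"
    unfolding H_def by (simp only: ginv_g[OF x] sum_delta_mult')
  also have "\<dots> = (\<Sum>b\<in>UNIV. \<Sum>e\<in>UNIV. L b e * H e b)"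
    unfolding L_def by (simp add: sum_distrib_left sum_distrib_right mult.assoc) (rule sum.cong[OF refl], rule sum.swap)
  finally have S: "(\<Sum>b\<in>UNIV. riem g c a b b x) = (\<Sum>b\<in>UNIV. \<Sum>e\<in>UNIV. L b e * H e b)" .
  have "(\<Sum>b\<in>UNIV. \<Sum>e\<in>UNIV. L b e * H e b) = (\<Sum>e\<in>UNIV. \<Sum>b\<in>UNIV. L b e * H e b)" by (rule sum.swap)
  also have "\<dots> = - (\<Sum>e\<in>UNIV. \<Sum>b\<in>UNIV. L e b * H b e)"
    unfolding sum_negf[symmetric]
    by (rule sum.cong[OF refl], rule sum.cong[OF refl], subst Lanti, subst Hsym, simp)
  finally have "(\<Sum>b\<in>UNIV. \<Sum>e\<in>UNIV. L b e * H e b) = 0" by simp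
  then show ?thesis using S by simp
qed

lemma ric_sym:
  assumes x: "x \<in> U"
  shows "ric g a c x = ric g c a x"
proof -
  have "riem g a b c b x - riem g c b a b x = - riem g c a b b x" for b
    using bianchi[OF x, of a b c b] riem_antisym1[of c b a b x] by simp
  then have "ric g a c x - ric g c a x = - (\<Sum>b\<in>UNIV. riem g c a b b x)"
    unfolding ric_def by (simp add: sum_subtractf[symmetric] sum_negf)
  then show ?thesis using riem_trace[OF x] by simp
qed

end


context rmetric
begin

lemma cov1_diff:
  assumes x: "x \<in> U" and A: "\<And>i. sm U (\<lambda>x. A x $ i)" and B: "\<And>i. sm U (\<lambda>x. B x $ i)"
  shows "cov1 g (\<lambda>x. A x - B x) d a x = cov1 g A d a x - cov1 g B d a x"
proof -
  have "pd d (\<lambda>y. (A y - B y) $ a) x = pd d (\<lambda>y. A y $ a - B y $ a) x" by simp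
  also have "\<dots> = pd d (\<lambda>y. A y $ a) x - pd d (\<lambda>y. B y $ a) x"
    by (rule pd_diff[OF sm_diffble[OF A x] sm_diffble[OF B x]])
  finally show ?thesis unfolding cov1_def by (simp add: sum_subtractf algebra_simps)
qed

lemma cov3_ric_expr:
  assumes A: "\<And>i. sm U (\<lambda>x. A x $ i)" and B: "\<And>i. sm U (\<lambda>x. B x $ i)" and D: "\<And>i. sm U (\<lambda>x. D x $ i)"
    and H: "\<And>x a b c. x \<in> U \<Longrightarrow> cov2 g (ric g) a b c x = A x $ a * ric g b c x + B x $ b * ric g a c x + D x $ c * ric g a b x"
    and x: "x \<in> U"
  shows "cov3 g (ric g) d a b c x = cov1 g A d a x * ric g b c x + A x $ a * cov2 g (ric g) d b c x
    + cov1 g B d b x * ric g a c x + B x $ b * cov2 g (ric g) d a c x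
    + cov1 g D d c x * ric g a b x + D x $ c * cov2 g (ric g) d a b x"
proof -
  have P: "pd d (cov2 g (ric g) a b c) x =
      pd d (\<lambda>y. A y $ a) x * ric g b c x + A x $ a * pd d (ric g b c) x
    + pd d (\<lambda>y. B y $ b) x * ric g a c x + B x $ b * pd d (ric g a c) x
    + pd d (\<lambda>y. D y $ c) x * ric g a b x + D x $ c * pd d (ric g a b) x"
  proof -
    have "pd d (cov2 g (ric g) a b c) x = pd d (\<lambda>y. (A y $ a * ric g b c y + B y $ b * ric g a c y) + D y $ c * ric g a b y) x"
      by (rule pd_local[OF openU x]) (simp add: H)
    also have "\<dots> = pd d (\<lambda>y. A y $ a * ric g b c y + B y $ b * ric g a c y) x + pd d (\<lambda>y. D y $ c * ric g a b y) x"
      by (rule pd_add; rule sm_diffble[OF _ x]; intro sm_add sm_mult openU A B D sm_ric)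
    also have "pd d (\<lambda>y. A y $ a * ric g b c y + B y $ b * ric g a c y) x
        = pd d (\<lambda>y. A y $ a * ric g b c y) x + pd d (\<lambda>y. B y $ b * ric g a c y) x"
      by (rule pd_add; rule sm_diffble[OF _ x]; intro sm_add sm_mult openU A B D sm_ric)
    finally show ?thesis
      by (simp add: pd_mult sm_diffble[OF A x] sm_diffble[OF B x] sm_diffble[OF D x] sm_diffble[OF sm_ric x])
  qed
  show ?thesis
  proof (rule leibniz_alg[where G="\<lambda>k a b. chr g k a b x" and Av="\<lambda>i. A x $ i" and Bv="\<lambda>i. B x $ i"
        and Dv="\<lambda>i. D x $ i" and dA="\<lambda>d a. pd d (\<lambda>y. A y $ a) x" and dB="\<lambda>d a. pd d (\<lambda>y. B y $ a) x"
        and dD="\<lambda>d a. pd d (\<lambda>y. D y $ a) x" and R="\<lambda>b c. ric g b c x" and dR="\<lambda>d b c. pd d (ric g b c) x"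
        and Q="\<lambda>a b c. cov2 g (ric g) a b c x" and P="pd d (cov2 g (ric g) a b c) x", unfolded cov1_def[symmetric]])
    show "\<And>a b c. cov2 g (ric g) a b c x = A x $ a * ric g b c x + B x $ b * ric g a c x + D x $ c * ric g a b x"
      by (rule H[OF x])
    show "\<And>a b c. cov2 g (ric g) a b c x = pd a (ric g b c) x - (\<Sum>k\<in>UNIV. chr g k a b x * ric g k c x) - (\<Sum>k\<in>UNIV. chr g k a c x * ric g b k x)"
      by (simp add: cov2_def)
  qed (auto simp: P cov3_def)
qed

end


context rmetric
begin

lemma cov2_ric_sym:
  assumes x: "x \<in> U"
  shows "cov2 g (ric g) a b c x = cov2 g (ric g) a c b x"
proof -
  have p: "pd a (ric g b c) x = pd a (ric g c b) x"
    by (rule pd_local[OF openU x]) (simp add: ric_sym)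
  have s1: "(\<Sum>k\<in>UNIV. chr g k a b x * ric g k c x) = (\<Sum>k\<in>UNIV. chr g k a b x * ric g c k x)"
    by (simp add: ric_sym[OF x, of _ c])
  have s2: "(\<Sum>k\<in>UNIV. chr g k a c x * ric g b k x) = (\<Sum>k\<in>UNIV. chr g k a c x * ric g k b x)"
    by (simp add: ric_sym[OF x, of _ b])
  show ?thesis unfolding cov2_def p s1 s2 by simp
qed

lemma main_gen:
  assumes A: "\<And>i. sm U (\<lambda>x. A x $ i)" and B: "\<And>i. sm U (\<lambda>x. B x $ i)" and D: "\<And>i. sm U (\<lambda>x. D x $ i)"
    and H: "\<And>x a b c. x \<in> U \<Longrightarrow> cov2 g (ric g) a b c x = A x $ a * ric g b c x + B x $ b * ric g a c x + D x $ c * ric g a b x"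
    and x: "x \<in> U"
  shows "ric g c b x * (cov1 g (\<lambda>x. A x - B x) d a x - cov1 g (\<lambda>x. A x - B x) a d x)
   + ric g c a x * (cov1 g (\<lambda>x. A x - B x) b d x - cov1 g (\<lambda>x. A x - B x) d b x)
   + ric g c d x * (cov1 g (\<lambda>x. A x - B x) a b x - cov1 g (\<lambda>x. A x - B x) b a x)
   = (\<Sum>m\<in>UNIV. ric g d m x * riem g b a c m x + ric g b m x * riem g a d c m x
                 + ric g a m x * riem g d b c m x)"
proof -
  define E where "E d a b = cov3 g (ric g) d a b c x - cov3 g (ric g) a d b c x" for d a b
  have cyc: "E d a b + E a b d + E b d a =
     ric g c b x * ((cov1 g A d a x - cov1 g B d a x) - (cov1 g A a d x - cov1 g B a d x))
     + ric g c a x * ((cov1 g A b d x - cov1 g B b d x) - (cov1 g A d b x - cov1 g B d b x))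
     + ric g c d x * ((cov1 g A a b x - cov1 g B a b x) - (cov1 g A b a x - cov1 g B b a x))"
  proof (rule cyclic_alg[where R="\<lambda>i j. ric g i j x" and Q="\<lambda>a b c. cov2 g (ric g) a b c x"
      and Av="\<lambda>i. A x $ i" and Bv="\<lambda>i. B x $ i" and Dv="\<lambda>i. D x $ i"
      and cA="\<lambda>d a. cov1 g A d a x" and cB="\<lambda>d a. cov1 g B d a x" and cD="\<lambda>d a. cov1 g D d a x"])
    show "\<And>i j. ric g i j x = ric g j i x" by (rule ric_sym[OF x])
    show "\<And>a b c. cov2 g (ric g) a b c x = A x $ a * ric g b c x + B x $ b * ric g a c x + D x $ c * ric g a b x"
      by (rule H[OF x])
    show "\<And>d a b. E d a b = (cov1 g A d a x * ric g b c x + A x $ a * cov2 g (ric g) d b c x + cov1 g B d b x * ric g a c x +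
            B x $ b * cov2 g (ric g) d a c x + cov1 g D d c x * ric g a b x + D x $ c * cov2 g (ric g) d a b x) -
           (cov1 g A a d x * ric g b c x + A x $ d * cov2 g (ric g) a b c x + cov1 g B a b x * ric g d c x +
            B x $ b * cov2 g (ric g) a d c x + cov1 g D a c x * ric g d b x + D x $ c * cov2 g (ric g) a d b x)"
      unfolding E_def by (simp add: cov3_ric_expr[OF A B D H x])
  qed
  have ri: "E d a b = - (\<Sum>m\<in>UNIV. riem g d a b m x * ric g m c x) - (\<Sum>m\<in>UNIV. riem g d a c m x * ric g b m x)" for d a b
    unfolding E_def by (rule ricci_identity[OF x sm_ric])
  have bs: "(\<Sum>m\<in>UNIV. riem g d a b m x * ric g m c x) + (\<Sum>m\<in>UNIV. riem g a b d m x * ric g m c x)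
      + (\<Sum>m\<in>UNIV. riem g b d a m x * ric g m c x) = 0"
  proof -
    have "(\<Sum>m\<in>UNIV. riem g d a b m x * ric g m c x) + (\<Sum>m\<in>UNIV. riem g a b d m x * ric g m c x)
      + (\<Sum>m\<in>UNIV. riem g b d a m x * ric g m c x)
      = (\<Sum>m\<in>UNIV. (riem g d a b m x + riem g a b d m x + riem g b d a m x) * ric g m c x)"
      by (simp add: sum.distrib algebra_simps)
    also have "\<dots> = 0" by (simp add: bianchi[OF x])
    finally show ?thesis .
  qed
  have rhs: "(\<Sum>m\<in>UNIV. ric g d m x * riem g b a c m x + ric g b m x * riem g a d c m x
                 + ric g a m x * riem g d b c m x)
     = - (\<Sum>m\<in>UNIV. riem g d a c m x * ric g b m x) - (\<Sum>m\<in>UNIV. riem g a b c m x * ric g d m x)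
       - (\<Sum>m\<in>UNIV. riem g b d c m x * ric g a m x)"
    by (simp add: riem_antisym1[of b a c _ x] riem_antisym1[of a d c _ x] riem_antisym1[of d b c _ x]
        sum.distrib sum_negf sum_subtractf algebra_simps)
  show ?thesis
    unfolding cov1_diff[OF x A B] rhs cyc[symmetric] ri using bs by linarith
qed

end

theorem mainTheorem13:
  fixes U :: "(real^'n::finite) set"
    and g :: "real^'n \<Rightarrow> real^'n^'n"
    and A B D :: "real^'n \<Rightarrow> real^'n"
  assumes "weakly_ricci_symmetric_on U g A B D"
  shows "\<forall>\<alpha> \<in> {(\<lambda>x. A x - B x), (\<lambda>x. A x - D x)}. \<forall>x\<in>U. \<forall>a b c d.
     ric g c b x * (cov1 g \<alpha> d a x - cov1 g \<alpha> a d x)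
   + ric g c a x * (cov1 g \<alpha> b d x - cov1 g \<alpha> d b x)
   + ric g c d x * (cov1 g \<alpha> a b x - cov1 g \<alpha> b a x)
   = (\<Sum>m\<in>UNIV. ric g d m x * riem g b a c m x + ric g b m x * riem g a d c m x
                 + ric g a m x * riem g d b c m x)"
proof -
  have rm: "rmetric U g" using assms unfolding weakly_ricci_symmetric_on_def rmetric_def by blast
  have A: "\<And>i. sm U (\<lambda>x. A x $ i)" and B: "\<And>i. sm U (\<lambda>x. B x $ i)" and D: "\<And>i. sm U (\<lambda>x. D x $ i)"
    using assms unfolding weakly_ricci_symmetric_on_def sm_smooth by blast+
  have H: "\<And>x a b c. x \<in> U \<Longrightarrow> cov2 g (ric g) a b c x = A x $ a * ric g b c x + B x $ b * ric g a c x + D x $ c * ric g a b x"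
    using assms unfolding weakly_ricci_symmetric_on_def by blast
  have H': "\<And>x a b c. x \<in> U \<Longrightarrow> cov2 g (ric g) a b c x = A x $ a * ric g b c x + D x $ b * ric g a c x + B x $ c * ric g a b x"
  proof -
    fix x a b c assume x: "x \<in> U"
    have "cov2 g (ric g) a b c x = cov2 g (ric g) a c b x" by (rule rmetric.cov2_ric_sym[OF rm x])
    also have "\<dots> = A x $ a * ric g c b x + B x $ c * ric g a b x + D x $ b * ric g a c x" by (rule H[OF x])
    finally show "cov2 g (ric g) a b c x = A x $ a * ric g b c x + D x $ b * ric g a c x + B x $ c * ric g a b x"
      using rmetric.ric_sym[OF rm x, of c b] by simp
  qed
  show ?thesis
    using rmetric.main_gen[OF rm A B D H] rmetric.main_gen[OF rm A D B H'] by simp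
qed


end
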